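(* Fix an integer $\ell\ge 1$. Then for all $p=O(n)$, $D^p(\textsc{Sub}(C_{2\ell+1}))=\tilde O(n^2/p)$.
   Context: $C_k$ is the cycle on $k$ vertices. Insertion-only streaming model: the edges of an $n$-vertex undirected input graph $G$ arrive as a stream in arbitrary order; the algorithm knows $n$, makes $p$ passes, and has $S$ bits of memory. $\textsc{Sub}(H)$: decide whether $G$ contains $H$ as a subgraph and if so output the vertex set of a copy. $D^p(\Pi)$ is the minimum space of a deterministic $p$-pass streaming algorithm solving $\Pi$. $\tilde O$ hides polylogarithmic factors in $n$. *)

theory Defs
  imports Complex_Main
begin

definition is_edge :: "nat \<Rightarrow> nat set \<Rightarrow> bool" where
  "is_edge n e \<longleftrightarrow> (\<exists>u v. u \<noteq> v \<and> u < n \<and> v < n \<and> e = {u, v})"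

definition cycle_copy :: "nat \<Rightarrow> nat set set \<Rightarrow> (nat \<Rightarrow> nat) \<Rightarrow> bool" where
  "cycle_copy k G f \<longleftrightarrow> inj_on f {0..<k} \<and>
     (\<forall>i<k. {f i, f (Suc i mod k)} \<in> G)"

text \<open>A deterministic streaming algorithm: (init, step, between, out).
  init is the initial memory state, step i q e the state after reading edge e
  in pass i from state q, between i q the (arbitrary) computation done at the
  start of pass i, out the final output (None = no copy, Some V = vertex set).\<close>
type_synonym stream_alg =
  "nat \<times> (nat \<Rightarrow> nat \<Rightarrow> nat set \<Rightarrow> nat) \<times> (nat \<Rightarrow> nat \<Rightarrow> nat) \<times> (nat \<Rightarrow> nat set option)"

text \<open>S bits of memory: every memory state is one of 2^S states.\<close>
definition uses_space :: "nat \<Rightarrow> stream_alg \<Rightarrow> bool" where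
  "uses_space S A = (case A of (init, step, betw, out) \<Rightarrow>
     init < 2 ^ S \<and> (\<forall>i q e. q < 2 ^ S \<longrightarrow> step i q e < 2 ^ S) \<and>
     (\<forall>i q. q < 2 ^ S \<longrightarrow> betw i q < 2 ^ S))"

definition run_pass :: "stream_alg \<Rightarrow> nat set list \<Rightarrow> nat \<Rightarrow> nat \<Rightarrow> nat" where
  "run_pass A xs i q = (case A of (init, step, betw, out) \<Rightarrow>
     foldl (\<lambda>s e. step i s e) (betw i q) xs)"

definition run_alg :: "stream_alg \<Rightarrow> nat \<Rightarrow> nat set list \<Rightarrow> nat set option" where
  "run_alg A p xs = (case A of (init, step, betw, out) \<Rightarrow>
     out (foldl (\<lambda>q i. run_pass A xs i q) init [0..<p]))"

definition solves_sub_cycle :: "nat \<Rightarrow> nat \<Rightarrow> nat \<Rightarrow> stream_alg \<Rightarrow> bool" where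
  "solves_sub_cycle k n p A \<longleftrightarrow>
     (\<forall>xs. distinct xs \<and> (\<forall>e\<in>set xs. is_edge n e) \<longrightarrow>
        (case run_alg A p xs of
           None \<Rightarrow> \<not> (\<exists>f. cycle_copy k (set xs) f)
         | Some V \<Rightarrow> (\<exists>f. cycle_copy k (set xs) f \<and> V = f ` {0..<k})))"

definition D_sub_cycle :: "nat \<Rightarrow> nat \<Rightarrow> nat \<Rightarrow> nat" where
  "D_sub_cycle k n p = (LEAST S. \<exists>A. uses_space S A \<and> solves_sub_cycle k n p A)"

end

theory Submission
  imports Defs "HOL-Library.FuncSet" "HOL-Library.Discrete_Functions"
begin


definition runA :: "'s \<Rightarrow> (nat \<Rightarrow> 's \<Rightarrow> nat set \<Rightarrow> 's) \<Rightarrow> (nat \<Rightarrow> 's \<Rightarrow> 's) \<Rightarrow> nat \<Rightarrow> nat set list \<Rightarrow> 's" where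
  "runA init step betw p xs = foldl (\<lambda>q i. foldl (\<lambda>s e. step i s e) (betw i q) xs) init [0..<p]"

lemma D_le:
  fixes Q :: "'s set"
  assumes fin: "finite Q" and ini: "init \<in> Q"
    and stQ: "\<And>i q e. q \<in> Q \<Longrightarrow> step i q e \<in> Q"
    and beQ: "\<And>i q. q \<in> Q \<Longrightarrow> betw i q \<in> Q"
    and cardQ: "card Q \<le> 2 ^ S"
    and corr: "\<And>xs. distinct xs \<Longrightarrow> \<forall>e\<in>set xs. is_edge n e \<Longrightarrow>
      (case out (runA init step betw p xs) of
           None \<Rightarrow> \<not> (\<exists>f. cycle_copy k (set xs) f)
         | Some V \<Rightarrow> (\<exists>f. cycle_copy k (set xs) f \<and> V = f ` {0..<k}))"
  shows "D_sub_cycle k n p \<le> S"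
proof -
  obtain h where h: "bij_betw h Q {0..<card Q}" using ex_bij_betw_finite_nat[OF fin] by blast
  define dec where "dec = the_inv_into Q h"
  have hQ: "\<And>q. q \<in> Q \<Longrightarrow> h q < card Q" using h by (auto simp: bij_betw_def)
  have dech: "\<And>q. q \<in> Q \<Longrightarrow> dec (h q) = q" unfolding dec_def
    using h by (simp add: bij_betw_def the_inv_into_f_f)
  have decQ: "\<And>m. m < card Q \<Longrightarrow> dec m \<in> Q" unfolding dec_def
    using h by (metis atLeastLessThan_iff bij_betw_def the_inv_into_into zero_le order_refl)
  define A :: stream_alg where "A = (h init, \<lambda>i q e. if q < card Q then h (step i (dec q) e) else 0,
      \<lambda>i q. if q < card Q then h (betw i (dec q)) else 0, \<lambda>q. out (dec q))"
  have us: "uses_space S A"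
  proof -
    have "\<And>q. q \<in> Q \<Longrightarrow> h q < 2 ^ S" using hQ cardQ less_le_trans by blast
    then show ?thesis unfolding uses_space_def A_def using ini stQ beQ decQ by auto
  qed
  have inQ: "foldl (\<lambda>s e. step i s e) q ys \<in> Q" if "q \<in> Q" for q i ys
    using that by (induction ys arbitrary: q) (auto simp: stQ)
  have sim1: "foldl (\<lambda>s e. (if s < card Q then h (step i (dec s) e) else 0)) (h q) ys
       = h (foldl (\<lambda>s e. step i s e) q ys)" if "q \<in> Q" for q i ys
    using that
  proof (induction ys arbitrary: q)
    case Nil then show ?case by simp
  next
    case (Cons a ys) then show ?case using hQ dech stQ by simp
  qed
  have sim2: "foldl (\<lambda>q i. run_pass A xs i q) (h init) [0..<m]
      = h (foldl (\<lambda>q i. foldl (\<lambda>s e. step i s e) (betw i q) xs) init [0..<m])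
     \<and> foldl (\<lambda>q i. foldl (\<lambda>s e. step i s e) (betw i q) xs) init [0..<m] \<in> Q" for m xs
  proof (induction m)
    case 0 then show ?case using ini by simp
  next
    case (Suc m)
    then show ?case using hQ dech beQ inQ sim1
      by (simp add: run_pass_def A_def)
  qed
  have "solves_sub_cycle k n p A"
    unfolding solves_sub_cycle_def
  proof (intro allI impI)
    fix xs assume a: "distinct xs \<and> (\<forall>e\<in>set xs. is_edge n e)"
    have "run_alg A p xs = out (runA init step betw p xs)"
      using sim2[where m=p and xs=xs] dech unfolding run_alg_def runA_def
      by (simp add: A_def)
    then show "case run_alg A p xs of None \<Rightarrow> \<not> (\<exists>f. cycle_copy k (set xs) f)
         | Some V \<Rightarrow> (\<exists>f. cycle_copy k (set xs) f \<and> V = f ` {0..<k})"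
      using corr a by simp
  qed
  with us have "\<exists>A. uses_space S A \<and> solves_sub_cycle k n p A" by blast
  then show ?thesis unfolding D_sub_cycle_def by (rule Least_le)
qed




lemma edges_sub: "{e. is_edge n e} \<subseteq> (\<lambda>(u,v). {u,v}) ` ({0..<n} \<times> {0..<n})"
proof
  fix e assume "e \<in> {e. is_edge n e}"
  then obtain u v where "u < n" "v < n" "e = {u,v}" unfolding is_edge_def by auto
  then show "e \<in> (\<lambda>(u,v). {u,v}) ` ({0..<n} \<times> {0..<n})" by (auto intro!: image_eqI[where x="(u,v)"])
qed

lemma edges_fin: "finite {e. is_edge n e}"
  by (rule finite_subset[OF edges_sub]) simp

lemma edges_card: "card {e. is_edge n e} \<le> n * n"
proof -
  have "card {e. is_edge n e} \<le> card ((\<lambda>(u,v). {u,v}) ` ({0..<n} \<times> {0..<n}))"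
    by (rule card_mono) (simp, rule edges_sub)
  also have "\<dots> \<le> card ({0..<n} \<times> {0..<n})" by (rule card_image_le) simp
  finally show ?thesis by simp
qed

lemma trivial_alg:
  assumes "p \<ge> 1"
  shows "D_sub_cycle k n p \<le> n * n"
proof -
  define step :: "nat \<Rightarrow> nat set set \<Rightarrow> nat set \<Rightarrow> nat set set" where
    "step = (\<lambda>i E e. if is_edge n e then insert e E else E)"
  define out :: "nat set set \<Rightarrow> nat set option" where
    "out = (\<lambda>E. if \<exists>f. cycle_copy k E f then Some ((SOME f. cycle_copy k E f) ` {0..<k}) else None)"
  have fo: "foldl (\<lambda>s e. step i s e) E ys = E \<union> set ys" if "\<forall>e\<in>set ys. is_edge n e" for i E ys
    using that by (induction ys arbitrary: E) (auto simp: step_def)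
  have runp: "runA {} step (\<lambda>i q. q) m xs = (if m = 0 then {} else set xs)"
    if "\<forall>e\<in>set xs. is_edge n e" for m xs
    using that by (induction m) (auto simp: runA_def fo)
  show ?thesis
  proof (rule D_le[where Q = "Pow {e. is_edge n e}" and init = "{}" and step = step
        and betw = "\<lambda>i q. q" and out = out])
    show "finite (Pow {e. is_edge n e})" using edges_fin by simp
    show "card (Pow {e. is_edge n e}) \<le> 2 ^ (n * n)"
      using edges_fin edges_card by (simp add: card_Pow power_increasing)
    show "step i q e \<in> Pow {e. is_edge n e}" if "q \<in> Pow {e. is_edge n e}" for i q e
      using that by (auto simp: step_def)
    fix xs :: "nat set list" assume "distinct xs" "\<forall>e\<in>set xs. is_edge n e"
    then have "runA {} step (\<lambda>i q. q) p xs = set xs" using runp assms by simp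
    then show "case out (runA {} step (\<lambda>i q. q) p xs) of None \<Rightarrow> \<not> (\<exists>f. cycle_copy k (set xs) f)
         | Some V \<Rightarrow> (\<exists>f. cycle_copy k (set xs) f \<and> V = f ` {0..<k})"
      unfolding out_def by (auto intro: someI_ex[where P="cycle_copy k (set xs)"])
  qed auto
qed




definition bt :: "nat \<Rightarrow> nat \<Rightarrow> bool" where "bt x c = odd (x div 2 ^ c)"
definition prj :: "nat list \<Rightarrow> nat \<Rightarrow> bool list" where "prj bs x = map (bt x) bs"
definition chi :: "nat \<Rightarrow> nat list \<times> bool list list \<Rightarrow> nat \<Rightarrow> nat option" where
  "chi k \<phi> x = (if \<exists>i<k. prj (fst \<phi>) x = snd \<phi> ! i
     then Some (LEAST i. i < k \<and> prj (fst \<phi>) x = snd \<phi> ! i) else None)"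
definition fam :: "nat \<Rightarrow> nat \<Rightarrow> (nat list \<times> bool list list) list" where
  "fam k b = List.product (List.n_lists (k - 1) [0..<b]) (List.n_lists k (List.n_lists (k - 1) [False, True]))"

lemma length_n_lists: "length (List.n_lists m xs) = length xs ^ m"
  by (induction m) (auto simp: length_concat comp_def sum_list_triv)

lemma length_fam: "length (fam k b) = b ^ (k - 1) * (2 ^ (k - 1)) ^ k"
  by (simp add: fam_def length_n_lists numeral_2_eq_2)

lemma chi_lt: "chi k \<phi> x = Some i \<Longrightarrow> i < k"
  unfolding chi_def by (auto split: if_splits intro: LeastI2_ex)

lemma bt_diff:
  assumes "x \<noteq> y" "x < 2 ^ b" "y < 2 ^ b"
  shows "\<exists>c<b. bt x c \<noteq> bt y c"
proof -
  obtain c where c: "bit x c \<noteq> bit y c" using assms(1) bit_eq_iff by blast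
  have "c < b"
  proof (rule ccontr)
    assume "\<not> c < b"
    then have "(2::nat) ^ b \<le> 2 ^ c" by (simp add: power_increasing)
    then have "x < 2 ^ c" "y < 2 ^ c" using assms by linarith+
    then have "x div 2 ^ c = 0" "y div 2 ^ c = 0" by simp_all
    then show False using c by (simp add: bit_iff_odd)
  qed
  then show ?thesis using c by (auto simp: bt_def bit_iff_odd)
qed

lemma sep:
  assumes "finite T" "T \<subseteq> {..<2 ^ b}"
  shows "\<exists>bs. length bs \<le> card T - 1 \<and> set bs \<subseteq> {0..<b} \<and> inj_on (prj bs) T"
  using assms
proof (induction "card T" arbitrary: T rule: less_induct)
  case less
  show ?case
  proof (cases "card T \<le> 1")
    case True
    then have "\<forall>x\<in>T. \<forall>y\<in>T. x = y" using card_le_Suc0_iff_eq[OF less.prems(1)] by simp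
    then have "inj_on (prj []) T" by (simp add: inj_on_def)
    then show ?thesis by (intro exI[of _ "[]"]) simp
  next
    case False
    then have "\<not> (\<forall>x\<in>T. \<forall>y\<in>T. x = y)" using card_le_Suc0_iff_eq[OF less.prems(1)] by simp
    then obtain x y where xy: "x \<in> T" "y \<in> T" "x \<noteq> y" by blast
    then obtain c where c: "c < b" "bt x c \<noteq> bt y c"
      using bt_diff[of x y b] less.prems(2) by auto
    define T0 where "T0 = {z\<in>T. \<not> bt z c}"
    define T1 where "T1 = {z\<in>T. bt z c}"
    have fin: "finite T0" "finite T1" using less.prems(1) by (auto simp: T0_def T1_def)
    have ne: "T0 \<noteq> {}" "T1 \<noteq> {}" using xy c by (auto simp: T0_def T1_def)
    have un: "T = T0 \<union> T1" "T0 \<inter> T1 = {}" by (auto simp: T0_def T1_def)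
    have "card (T0 \<union> T1) = card T0 + card T1" by (rule card_Un_disjoint[OF fin un(2)])
    then have cs: "card T = card T0 + card T1" using un(1) by simp
    have c0: "card T0 \<ge> 1" "card T1 \<ge> 1" using fin ne by (auto simp: Suc_le_eq card_gt_0_iff)
    obtain bs0 where b0: "length bs0 \<le> card T0 - 1" "set bs0 \<subseteq> {0..<b}" "inj_on (prj bs0) T0"
    proof -
      have "card T0 < card T" using cs c0 by simp
      moreover have "T0 \<subseteq> {..<2 ^ b}" using less.prems(2) un by blast
      ultimately show ?thesis using less.hyps[of T0] fin(1) that by blast
    qed
    obtain bs1 where b1: "length bs1 \<le> card T1 - 1" "set bs1 \<subseteq> {0..<b}" "inj_on (prj bs1) T1"
    proof -
      have "card T1 < card T" using cs c0 by simp
      moreover have "T1 \<subseteq> {..<2 ^ b}" using less.prems(2) un by blast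
      ultimately show ?thesis using less.hyps[of T1] fin(2) that by blast
    qed
    define bs where "bs = c # bs0 @ bs1"
    have "inj_on (prj bs) T"
    proof (rule inj_onI)
      fix z w assume zw: "z \<in> T" "w \<in> T" "prj bs z = prj bs w"
      then have e: "bt z c = bt w c" "prj bs0 z = prj bs0 w" "prj bs1 z = prj bs1 w"
        by (auto simp: bs_def prj_def)
      show "z = w"
      proof (cases "bt z c")
        case True
        then have "z \<in> T1" "w \<in> T1" using zw e by (auto simp: T1_def)
        then show ?thesis using b1(3) e by (auto dest: inj_onD)
      next
        case False
        then have "z \<in> T0" "w \<in> T0" using zw e by (auto simp: T0_def)
        then show ?thesis using b0(3) e by (auto dest: inj_onD)
      qed
    qed
    moreover have "length bs \<le> card T - 1" using b0 b1 cs c0 by (simp add: bs_def)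
    moreover have "set bs \<subseteq> {0..<b}" using b0 b1 c by (auto simp: bs_def)
    ultimately show ?thesis by blast
  qed
qed

lemma good_coloring:
  assumes k: "k \<ge> 1" and b: "b \<ge> 1" and inj: "inj_on f {0..<k}" and lt: "\<forall>i<k. f i < 2 ^ b"
  shows "\<exists>\<phi>\<in>set (fam k b). \<forall>i<k. chi k \<phi> (f i) = Some i"
proof -
  define xs where "xs = map f [0..<k]"
  have dxs: "distinct xs" using inj by (simp add: xs_def distinct_map)
  have cT: "card (set xs) = k" using distinct_card[OF dxs] by (simp add: xs_def)
  obtain bs where bs: "length bs \<le> k - 1" "set bs \<subseteq> {0..<b}" "inj_on (prj bs) (set xs)"
  proof -
    have "set xs \<subseteq> {..<2 ^ b}" using lt by (auto simp: xs_def)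
    then show ?thesis using sep[of "set xs" b] cT that by auto
  qed
  define bs' where "bs' = bs @ replicate (k - 1 - length bs) 0"
  have l': "length bs' = k - 1" using bs by (simp add: bs'_def)
  have s': "set bs' \<subseteq> {0..<b}" using bs b by (auto simp: bs'_def)
  have i': "inj_on (prj bs') (set xs)"
  proof (rule inj_onI)
    fix z w assume "z \<in> set xs" "w \<in> set xs" "prj bs' z = prj bs' w"
    then have "prj bs z = prj bs w" by (simp add: bs'_def prj_def)
    then show "z = w" using bs(3) \<open>z \<in> set xs\<close> \<open>w \<in> set xs\<close> by (auto dest: inj_onD)
  qed
  define rs where "rs = map (prj bs') xs"
  have drs: "distinct rs" using dxs i' by (simp add: rs_def distinct_map)
  have lrs: "length rs = k" by (simp add: rs_def xs_def)
  have mem: "(bs', rs) \<in> set (fam k b)"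
    unfolding fam_def set_product set_n_lists using l' s' lrs
    by (auto simp: rs_def prj_def set_n_lists)
  have "chi k (bs', rs) (f i) = Some i" if "i < k" for i
  proof -
    have ri: "prj bs' (f i) = rs ! i" using that by (simp add: rs_def xs_def)
    have u: "j = i" if "j < k" "prj bs' (f i) = rs ! j" for j
      using nth_eq_iff_index_eq[OF drs, of j i] that ri lrs \<open>i < k\<close> by simp
    have "(LEAST j. j < k \<and> prj bs' (f i) = rs ! j) = i"
    proof (rule Least_equality)
      show "i < k \<and> prj bs' (f i) = rs ! i" using that ri by simp
      show "\<And>y. y < k \<and> prj bs' (f i) = rs ! y \<Longrightarrow> i \<le> y" using u by force
    qed
    moreover have "\<exists>j<k. prj bs' (f i) = rs ! j" using that ri by blast
    ultimately show ?thesis unfolding chi_def by simp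
  qed
  then show ?thesis using mem by blast
qed




type_synonym mstate = "nat set option \<times> (nat \<Rightarrow> nat \<Rightarrow> nat list option)"

definition colr :: "(nat list \<times> bool list list) list \<Rightarrow> nat \<Rightarrow> nat list \<times> bool list list" where
  "colr fm j = fm ! (j mod length fm)"
definition src :: "(nat list \<times> bool list list) list \<Rightarrow> nat \<Rightarrow> nat \<Rightarrow> nat \<Rightarrow> nat" where
  "src fm t j s = (j div length fm) * t + s"

definition Ext :: "(nat \<Rightarrow> nat option) \<Rightarrow> nat \<Rightarrow> nat \<Rightarrow> (nat \<Rightarrow> nat \<Rightarrow> nat list option) \<Rightarrow> nat \<Rightarrow> nat \<Rightarrow> bool" where
  "Ext \<chi> k ph T s w \<longleftrightarrow> \<chi> w = Some ph \<and> T s w \<noteq> None \<and> length (the (T s w)) < k"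

definition extT :: "nat \<Rightarrow> nat \<Rightarrow> nat \<Rightarrow> (nat \<Rightarrow> nat option) \<Rightarrow> nat \<Rightarrow> (nat \<Rightarrow> nat \<Rightarrow> nat list option) \<Rightarrow> nat set \<Rightarrow> (nat \<Rightarrow> nat \<Rightarrow> nat list option)" where
  "extT n k t \<chi> ph T e = (\<lambda>s u. if T s u = None \<and> s < t \<and> u < n \<and> u \<in> e \<and> \<chi> u = Some (Suc ph) \<and> (\<exists>w\<in>e. Ext \<chi> k ph T s w)
      then Some (the (T s (SOME w. w \<in> e \<and> Ext \<chi> k ph T s w)) @ [u]) else T s u)"

definition Cl :: "nat \<Rightarrow> (nat \<Rightarrow> nat option) \<Rightarrow> nat \<Rightarrow> (nat \<Rightarrow> nat) \<Rightarrow> (nat \<Rightarrow> nat \<Rightarrow> nat list option) \<Rightarrow> nat set \<Rightarrow> nat \<times> nat \<Rightarrow> bool" where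
  "Cl t \<chi> k sr T e sw \<longleftrightarrow> fst sw < t \<and> snd sw \<in> e \<and> sr (fst sw) \<in> e \<and> snd sw \<noteq> sr (fst sw) \<and>
      \<chi> (snd sw) = Some (k - 1) \<and> T (fst sw) (snd sw) \<noteq> None"

definition closeF :: "nat \<Rightarrow> (nat \<Rightarrow> nat option) \<Rightarrow> nat \<Rightarrow> (nat \<Rightarrow> nat) \<Rightarrow> (nat \<Rightarrow> nat \<Rightarrow> nat list option) \<Rightarrow> nat set \<Rightarrow> nat set option \<Rightarrow> nat set option" where
  "closeF t \<chi> k sr T e fd = (if fd = None \<and> (\<exists>sw. Cl t \<chi> k sr T e sw)
     then Some (set (the (T (fst (SOME sw. Cl t \<chi> k sr T e sw)) (snd (SOME sw. Cl t \<chi> k sr T e sw))))) else fd)"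

definition initT :: "nat \<Rightarrow> nat \<Rightarrow> (nat \<Rightarrow> nat option) \<Rightarrow> (nat \<Rightarrow> nat) \<Rightarrow> nat \<Rightarrow> nat \<Rightarrow> nat list option" where
  "initT n t \<chi> sr = (\<lambda>s u. if s < t \<and> u < n \<and> u = sr s \<and> \<chi> u = Some 0 then Some [u] else None)"

definition betwM :: "nat \<Rightarrow> nat \<Rightarrow> nat \<Rightarrow> (nat list \<times> bool list list) list \<Rightarrow> nat \<Rightarrow> mstate \<Rightarrow> mstate" where
  "betwM n k t fm i q = (if i mod k = 0
     then (fst q, initT n t (chi k (colr fm (i div k))) (src fm t (i div k))) else q)"

definition stepM :: "nat \<Rightarrow> nat \<Rightarrow> nat \<Rightarrow> (nat list \<times> bool list list) list \<Rightarrow> nat \<Rightarrow> mstate \<Rightarrow> nat set \<Rightarrow> mstate" where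
  "stepM n k t fm i q e = (if Suc (i mod k) < k
     then (fst q, extT n k t (chi k (colr fm (i div k))) (i mod k) (snd q) e)
     else (closeF t (chi k (colr fm (i div k))) k (src fm t (i div k)) (snd q) e (fst q), snd q))"

definition QM :: "nat \<Rightarrow> nat \<Rightarrow> nat \<Rightarrow> mstate set" where
  "QM n k t = {q. (\<forall>V. fst q = Some V \<longrightarrow> V \<subseteq> {0..<n}) \<and> (\<forall>s u. snd q s u \<noteq> None \<longrightarrow> s < t \<and> u < n)
     \<and> (\<forall>s u ps. snd q s u = Some ps \<longrightarrow> length ps \<le> k \<and> set ps \<subseteq> {0..<n})}"

definition pinv :: "nat set set \<Rightarrow> (nat \<Rightarrow> nat option) \<Rightarrow> (nat \<Rightarrow> nat) \<Rightarrow> (nat \<Rightarrow> nat \<Rightarrow> nat list option) \<Rightarrow> bool" where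
  "pinv G \<chi> sr T \<longleftrightarrow> (\<forall>s u ps. T s u = Some ps \<longrightarrow> ps \<noteq> [] \<and> ps ! 0 = sr s \<and> last ps = u \<and>
     (\<forall>i<length ps. \<chi> (ps ! i) = Some i) \<and> (\<forall>i. Suc i < length ps \<longrightarrow> {ps ! i, ps ! Suc i} \<in> G))"

definition finv :: "nat set set \<Rightarrow> nat \<Rightarrow> nat set option \<Rightarrow> bool" where
  "finv G k fd \<longleftrightarrow> (\<forall>V. fd = Some V \<longrightarrow> (\<exists>f. cycle_copy k G f \<and> V = f ` {0..<k}))"

lemma edge_pair: "is_edge n e \<Longrightarrow> a \<in> e \<Longrightarrow> b \<in> e \<Longrightarrow> a \<noteq> b \<Longrightarrow> e = {a, b}"
  unfolding is_edge_def by auto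

lemma pinv_len:
  assumes "pinv G \<chi> sr T" "T s u = Some ps" "\<chi> u = Some c"
  shows "length ps = Suc c"
proof -
  have "ps \<noteq> []" "last ps = u" "\<forall>i<length ps. \<chi> (ps ! i) = Some i"
    using assms unfolding pinv_def by blast+
  then have "length ps - 1 < length ps" by simp
  then have "\<chi> (ps ! (length ps - 1)) = Some (length ps - 1)" using \<open>\<forall>i<length ps. _\<close> by blast
  then have "\<chi> u = Some (length ps - 1)" using \<open>last ps = u\<close> \<open>ps \<noteq> []\<close> by (simp add: last_conv_nth)
  then show ?thesis using assms(3) \<open>ps \<noteq> []\<close> by simp
qed

lemma ext_pinv:
  assumes e: "e \<in> G" "is_edge n e" and P: "pinv G \<chi> sr T"
  shows "pinv G \<chi> sr (extT n k t \<chi> ph T e)"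
  unfolding pinv_def
proof (intro allI impI)
  fix s u ps assume h: "extT n k t \<chi> ph T e s u = Some ps"
  show "ps \<noteq> [] \<and> ps ! 0 = sr s \<and> last ps = u \<and> (\<forall>i<length ps. \<chi> (ps ! i) = Some i) \<and>
        (\<forall>i. Suc i < length ps \<longrightarrow> {ps ! i, ps ! Suc i} \<in> G)"
  proof (cases "T s u = None \<and> s < t \<and> u < n \<and> u \<in> e \<and> \<chi> u = Some (Suc ph) \<and> (\<exists>w\<in>e. Ext \<chi> k ph T s w)")
    case False
    have "extT n k t \<chi> ph T e s u = T s u" by (simp only: extT_def if_not_P[OF False])
    then have "T s u = Some ps" using h by simp
    then show ?thesis using P unfolding pinv_def by blast
  next
    case True
    define w where "w = (SOME w. w \<in> e \<and> Ext \<chi> k ph T s w)"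
    have w: "w \<in> e \<and> Ext \<chi> k ph T s w" unfolding w_def
      by (rule someI_ex) (use True in blast)
    then obtain ps0 where ps0: "T s w = Some ps0" unfolding Ext_def by auto
    have pse: "ps = ps0 @ [u]" using h True ps0 by (simp add: extT_def w_def[symmetric])
    have cw: "\<chi> w = Some ph" using w by (simp add: Ext_def)
    have l0: "length ps0 = Suc ph" using pinv_len[OF P ps0 cw] .
    have I: "ps0 \<noteq> []" "ps0 ! 0 = sr s" "last ps0 = w" "\<forall>i<length ps0. \<chi> (ps0 ! i) = Some i"
      "\<forall>i. Suc i < length ps0 \<longrightarrow> {ps0 ! i, ps0 ! Suc i} \<in> G"
      using P ps0 unfolding pinv_def by blast+
    have wu: "w \<noteq> u" using cw True by auto
    have ee: "e = {w, u}" using edge_pair[OF e(2)] w True wu by blast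
    have lastw: "ps0 ! ph = w" using I(3) l0 I(1) by (simp add: last_conv_nth)
    have c1: "\<forall>i<length ps. \<chi> (ps ! i) = Some i"
    proof (intro allI impI)
      fix i assume "i < length ps"
      then have "i < Suc ph \<or> i = Suc ph" using pse l0 by auto
      then show "\<chi> (ps ! i) = Some i"
      proof
        assume "i < Suc ph" then show ?thesis using I(4) l0 pse by (simp add: nth_append)
      next
        assume "i = Suc ph" then show ?thesis using True l0 pse by (simp add: nth_append)
      qed
    qed
    have c2: "\<forall>i. Suc i < length ps \<longrightarrow> {ps ! i, ps ! Suc i} \<in> G"
    proof (intro allI impI)
      fix i assume "Suc i < length ps"
      then have "Suc i < Suc ph \<or> i = ph" using pse l0 by auto
      then show "{ps ! i, ps ! Suc i} \<in> G"
      proof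
        assume "Suc i < Suc ph" then show ?thesis using I(5) l0 pse by (simp add: nth_append)
      next
        assume "i = ph" then show ?thesis using lastw l0 pse ee e(1) by (simp add: nth_append)
      qed
    qed
    show ?thesis using pse I c1 c2 by (simp add: nth_append)
  qed
qed


lemma init_pinv: "pinv G \<chi> sr (initT n t \<chi> sr)"
  unfolding pinv_def initT_def by (auto split: if_splits)

lemma close_finv:
  assumes e: "e \<in> G" "is_edge n e" and P: "pinv G \<chi> sr T" and F: "finv G k fd" and k: "k \<ge> 1"
  shows "finv G k (closeF t \<chi> k sr T e fd)"
proof (cases "fd = None \<and> (\<exists>sw. Cl t \<chi> k sr T e sw)")
  case False
  have "closeF t \<chi> k sr T e fd = fd" by (simp only: closeF_def if_not_P[OF False])
  then show ?thesis using F by simp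
next
  case True
  define sw where "sw = (SOME sw. Cl t \<chi> k sr T e sw)"
  have cl: "Cl t \<chi> k sr T e sw" unfolding sw_def by (rule someI_ex) (use True in blast)
  define s where "s = fst sw"
  define w where "w = snd sw"
  have cl2: "s < t" "w \<in> e" "sr s \<in> e" "w \<noteq> sr s" "\<chi> w = Some (k - 1)" "T s w \<noteq> None"
    using cl unfolding Cl_def s_def w_def by auto
  then obtain ps where ps: "T s w = Some ps" by auto
  have res: "closeF t \<chi> k sr T e fd = Some (set ps)"
    using True ps by (simp add: closeF_def sw_def[symmetric] s_def[symmetric] w_def[symmetric])
  have l: "length ps = k" using pinv_len[OF P ps cl2(5)] k by simp
  have I: "ps \<noteq> []" "ps ! 0 = sr s" "last ps = w" "\<forall>i<length ps. \<chi> (ps ! i) = Some i"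
    "\<forall>i. Suc i < length ps \<longrightarrow> {ps ! i, ps ! Suc i} \<in> G"
    using P ps unfolding pinv_def by blast+
  have ee: "e = {w, sr s}" using edge_pair[OF e(2)] cl2 by blast
  have lw: "ps ! (k - 1) = w" using I(3) I(1) l by (simp add: last_conv_nth)
  have "cycle_copy k G (\<lambda>i. ps ! i)"
    unfolding cycle_copy_def
  proof (intro conjI allI impI)
    show "inj_on (\<lambda>i. ps ! i) {0..<k}"
    proof (rule inj_onI)
      fix i j assume "i \<in> {0..<k}" "j \<in> {0..<k}" "ps ! i = ps ! j"
      then have "Some i = Some j" using I(4) l by (metis atLeastLessThan_iff)
      then show "i = j" by simp
    qed
    fix i assume i: "i < k"
    show "{ps ! i, ps ! (Suc i mod k)} \<in> G"
    proof (cases "Suc i < k")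
      case True
      then show ?thesis using I(5) l by simp
    next
      case False
      then have "Suc i = k" using i by simp
      then have "i = k - 1" "Suc i mod k = 0" by auto
      then show ?thesis using lw I(2) ee e(1) by (simp add: insert_commute)
    qed
  qed
  moreover have "set ps = (\<lambda>i. ps ! i) ` {0..<k}" using l by (auto simp: set_conv_nth image_def)
  ultimately show ?thesis using res unfolding finv_def by auto
qed

lemma ext_QM:
  assumes "q \<in> QM n k t"
  shows "(fst q, extT n k t \<chi> ph (snd q) e) \<in> QM n k t"
proof -
  have A: "\<forall>V. fst q = Some V \<longrightarrow> V \<subseteq> {0..<n}" "\<forall>s u. snd q s u \<noteq> None \<longrightarrow> s < t \<and> u < n"
     "\<forall>s u ps. snd q s u = Some ps \<longrightarrow> length ps \<le> k \<and> set ps \<subseteq> {0..<n}"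
    using assms unfolding QM_def by auto
  show ?thesis unfolding QM_def mem_Collect_eq
  proof (intro conjI)
    show "\<forall>V. fst (fst q, extT n k t \<chi> ph (snd q) e) = Some V \<longrightarrow> V \<subseteq> {0..<n}" using A by auto
    show "\<forall>s u. snd (fst q, extT n k t \<chi> ph (snd q) e) s u \<noteq> None \<longrightarrow> s < t \<and> u < n"
      using A by (auto simp: extT_def split: if_splits)
    show "\<forall>s u ps. snd (fst q, extT n k t \<chi> ph (snd q) e) s u = Some ps \<longrightarrow> length ps \<le> k \<and> set ps \<subseteq> {0..<n}"
    proof (intro allI impI)
    fix s u ps assume h: "snd (fst q, extT n k t \<chi> ph (snd q) e) s u = Some ps"
    show "length ps \<le> k \<and> set ps \<subseteq> {0..<n}"
    proof (cases "snd q s u = None \<and> s < t \<and> u < n \<and> u \<in> e \<and> \<chi> u = Some (Suc ph) \<and> (\<exists>w\<in>e. Ext \<chi> k ph (snd q) s w)")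
      case False
      have "extT n k t \<chi> ph (snd q) e s u = snd q s u" by (simp only: extT_def if_not_P[OF False])
      then show ?thesis using h A by auto
    next
      case True
      define w where "w = (SOME w. w \<in> e \<and> Ext \<chi> k ph (snd q) s w)"
      have w: "w \<in> e \<and> Ext \<chi> k ph (snd q) s w" unfolding w_def
        by (rule someI_ex) (use True in blast)
      then obtain ps0 where ps0: "snd q s w = Some ps0" "length ps0 < k" unfolding Ext_def by auto
      have "ps = ps0 @ [u]" using h True ps0 by (simp add: extT_def w_def[symmetric])
      then show ?thesis using ps0 A True by fastforce
    qed
    qed
  qed
qed

lemma close_QM:
  assumes "q \<in> QM n k t"
  shows "(closeF t \<chi> k sr (snd q) e (fst q), snd q) \<in> QM n k t"
proof -
  have A: "\<forall>V. fst q = Some V \<longrightarrow> V \<subseteq> {0..<n}" "\<forall>s u. snd q s u \<noteq> None \<longrightarrow> s < t \<and> u < n"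
     "\<forall>s u ps. snd q s u = Some ps \<longrightarrow> length ps \<le> k \<and> set ps \<subseteq> {0..<n}"
    using assms unfolding QM_def by auto
  have "V \<subseteq> {0..<n}" if h: "closeF t \<chi> k sr (snd q) e (fst q) = Some V" for V
  proof (cases "fst q = None \<and> (\<exists>sw. Cl t \<chi> k sr (snd q) e sw)")
    case False
    have "closeF t \<chi> k sr (snd q) e (fst q) = fst q" by (simp only: closeF_def if_not_P[OF False])
    then show ?thesis using h A by simp
  next
    case True
    define sw where "sw = (SOME sw. Cl t \<chi> k sr (snd q) e sw)"
    have cl: "Cl t \<chi> k sr (snd q) e sw" unfolding sw_def by (rule someI_ex) (use True in blast)
    then obtain ps where ps: "snd q (fst sw) (snd sw) = Some ps" unfolding Cl_def by auto
    have "V = set ps" using h True ps by (simp add: closeF_def sw_def[symmetric])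
    then show ?thesis using A ps by blast
  qed
  then show ?thesis using A unfolding QM_def by auto
qed

lemma stepM_QM: "q \<in> QM n k t \<Longrightarrow> stepM n k t fm i q e \<in> QM n k t"
  unfolding stepM_def using ext_QM close_QM by auto

lemma betwM_QM: "k \<ge> 1 \<Longrightarrow> q \<in> QM n k t \<Longrightarrow> betwM n k t fm i q \<in> QM n k t"
  unfolding betwM_def QM_def initT_def by auto

lemma ext_mono: "T s u \<noteq> None \<Longrightarrow> extT n k t \<chi> ph T e s u \<noteq> None"
  unfolding extT_def by auto

lemma close_mono: "fd \<noteq> None \<Longrightarrow> closeF t \<chi> k sr T e fd \<noteq> None"
  unfolding closeF_def by auto

lemma ext_event:
  assumes P: "pinv G \<chi> sr T" and T: "T s w \<noteq> None" and cw: "\<chi> w = Some ph" and cu: "\<chi> u = Some (Suc ph)"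
    and lt: "Suc ph < k" "s < t" "u < n" and e: "w \<in> e" "u \<in> e"
  shows "extT n k t \<chi> ph T e s u \<noteq> None"
proof (cases "T s u = None")
  case False then show ?thesis by (rule ext_mono)
next
  case True
  obtain ps where ps: "T s w = Some ps" using T by auto
  have "length ps = Suc ph" using pinv_len[OF P ps cw] .
  then have "Ext \<chi> k ph T s w" using ps cw lt unfolding Ext_def by auto
  then show ?thesis using True lt e cu unfolding extT_def by auto
qed

lemma close_event:
  assumes "Cl t \<chi> k sr T e sw"
  shows "closeF t \<chi> k sr T e fd \<noteq> None"
proof (cases "fd = None")
  case True
  then have "fd = None \<and> (\<exists>sw. Cl t \<chi> k sr T e sw)" using assms by blast
  then show ?thesis by (simp only: closeF_def if_P) simp
qed (rule close_mono)




lemma foldl_inv: "(\<And>q e. e \<in> set ys \<Longrightarrow> P q \<Longrightarrow> P (g q e)) \<Longrightarrow> P q \<Longrightarrow> P (foldl g q ys)"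
  by (induction ys arbitrary: q) auto

lemma foldl_event:
  assumes "e0 \<in> set ys" "\<And>q e. e \<in> set ys \<Longrightarrow> P q \<Longrightarrow> P (g q e)"
    "\<And>q e. e \<in> set ys \<Longrightarrow> R q \<Longrightarrow> R (g q e)" "\<And>q. P q \<Longrightarrow> R (g q e0)" "P q"
  shows "R (foldl g q ys)"
  using assms
proof (induction ys arbitrary: q)
  case Nil then show ?case by simp
next
  case (Cons a ys)
  show ?case
  proof (cases "a = e0")
    case True
    then have "R (g q a)" using Cons by simp
    then show ?thesis using foldl_inv[of ys R g "g q a"] Cons.prems(3) by simp
  next
    case False
    then have "e0 \<in> set ys" using Cons.prems(1) by simp
    then show ?thesis using Cons by simp
  qed
qed

locale run_ctx =
  fixes n k t :: nat and fm :: "(nat list \<times> bool list list) list" and xs :: "nat set list"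
  assumes k2: "k \<ge> 2" and valid: "\<forall>e\<in>set xs. is_edge n e"
begin

definition stA :: "nat \<Rightarrow> mstate" where
  "stA m = runA (None, \<lambda>_ _. None) (stepM n k t fm) (betwM n k t fm) m xs"

lemma stA_0: "stA 0 = (None, \<lambda>_ _. None)" by (simp add: stA_def runA_def)

lemma stA_Suc: "stA (Suc m) = foldl (\<lambda>s e. stepM n k t fm m s e) (betwM n k t fm m (stA m)) xs"
  by (simp add: stA_def runA_def)

abbreviation "G \<equiv> set xs"
abbreviation "chj j \<equiv> chi k (colr fm j)"
abbreviation "srj j \<equiv> src fm t j"

lemma betw_inv:
  assumes "finv G k (fst q)" "m mod k \<noteq> 0 \<longrightarrow> pinv G (chj (m div k)) (srj (m div k)) (snd q)"
  shows "finv G k (fst (betwM n k t fm m q)) \<and> pinv G (chj (m div k)) (srj (m div k)) (snd (betwM n k t fm m q))"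
  using assms init_pinv unfolding betwM_def by auto

lemma step_inv:
  assumes "e \<in> G" "finv G k (fst q) \<and> pinv G (chj (m div k)) (srj (m div k)) (snd q)"
  shows "finv G k (fst (stepM n k t fm m q e)) \<and> pinv G (chj (m div k)) (srj (m div k)) (snd (stepM n k t fm m q e))"
proof -
  have ie: "is_edge n e" using valid assms(1) by blast
  show ?thesis
  proof (cases "Suc (m mod k) < k")
    case True
    then show ?thesis using assms ext_pinv[OF assms(1) ie] unfolding stepM_def by simp
  next
    case False
    then show ?thesis using assms close_finv[OF assms(1) ie] k2 unfolding stepM_def by simp
  qed
qed

lemma pass_inv:
  assumes "finv G k (fst q)" "m mod k \<noteq> 0 \<longrightarrow> pinv G (chj (m div k)) (srj (m div k)) (snd q)"
  shows "finv G k (fst (foldl (\<lambda>s e. stepM n k t fm m s e) (betwM n k t fm m q) xs)) \<and>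
    pinv G (chj (m div k)) (srj (m div k)) (snd (foldl (\<lambda>s e. stepM n k t fm m s e) (betwM n k t fm m q) xs))"
  by (rule foldl_inv[where P = "\<lambda>q. finv G k (fst q) \<and> pinv G (chj (m div k)) (srj (m div k)) (snd q)"])
     (use step_inv betw_inv[OF assms] in auto)

lemma ginv: "finv G k (fst (stA m)) \<and> (m mod k \<noteq> 0 \<longrightarrow> pinv G (chj (m div k)) (srj (m div k)) (snd (stA m)))"
proof (induction m)
  case 0 then show ?case by (simp add: stA_0 finv_def)
next
  case (Suc m)
  have P: "finv G k (fst (stA (Suc m))) \<and> pinv G (chj (m div k)) (srj (m div k)) (snd (stA (Suc m)))"
    unfolding stA_Suc using pass_inv Suc by blast
  have "Suc m mod k \<noteq> 0 \<Longrightarrow> Suc m div k = m div k"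
    using k2 by (metis div_Suc)
  then show ?case using P by auto
qed

lemma binv: "pinv G (chj (m div k)) (srj (m div k)) (snd (betwM n k t fm m (stA m)))"
  using betw_inv ginv by blast

lemma sound: "finv G k (fst (stA p))" using ginv by blast

lemma stepM_fst: "fst q \<noteq> None \<Longrightarrow> fst (stepM n k t fm m q e) \<noteq> None"
proof -
  assume h: "fst q \<noteq> None"
  have "fst (stepM n k t fm m q e) = (if Suc (m mod k) < k then fst q
      else closeF t (chj (m div k)) k (srj (m div k)) (snd q) e (fst q))" by (simp add: stepM_def)
  then show ?thesis using h close_mono by metis
qed

lemma betwM_fst: "fst (betwM n k t fm m q) = fst q" by (simp add: betwM_def)

lemma fst_mono_pass: "fst q \<noteq> None \<Longrightarrow> fst (foldl (\<lambda>s e. stepM n k t fm m s e) (betwM n k t fm m q) xs) \<noteq> None"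
  by (rule foldl_inv[where P = "\<lambda>q. fst q \<noteq> None"]) (use stepM_fst betwM_fst in auto)

lemma fst_mono: assumes "fst (stA m) \<noteq> None" "m \<le> m'" shows "fst (stA m') \<noteq> None"
  using assms(2)
proof (induction m' rule: dec_induct)
  case base then show ?case using assms(1) by simp
next
  case (step m') then show ?case unfolding stA_Suc using fst_mono_pass by blast
qed

lemma complete:
  assumes cyc: "cycle_copy k G f" and a: "a < length fm" and col: "\<forall>i<k. chi k (fm ! a) (f i) = Some i"
    and tpos: "t > 0" and j0: "j0 = (f 0 div t) * length fm + a" and pp: "(j0 + 1) * k \<le> p"
  shows "fst (stA p) \<noteq> None"
proof -
  define s0 where "s0 = f 0 mod t"
  have s0t: "s0 < t" using tpos by (simp add: s0_def)
  have cj: "colr fm j0 = fm ! a" using a j0 by (simp add: colr_def)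
  have aux: "(g * L + a') div L = g" if "a' < L" for g L a' :: nat using that by simp
  have jd: "j0 div length fm = f 0 div t" using aux[OF a] j0 by simp
  have sj: "srj j0 s0 = f 0" using jd by (simp add: src_def s0_def)
  have edg: "{f i, f (Suc i mod k)} \<in> G" if "i < k" for i using cyc that unfolding cycle_copy_def by blast
  have fn: "f i < n" if "i < k" for i
  proof -
    have "is_edge n {f i, f (Suc i mod k)}" using edg[OF that] valid by blast
    then show ?thesis unfolding is_edge_def by (metis doubleton_eq_iff)
  qed
  have inj: "inj_on f {0..<k}" using cyc unfolding cycle_copy_def by blast
  have kp: "k > 0" using k2 by simp
  have dm: "(j0 * k + m) div k = j0" "(j0 * k + m) mod k = m" if "m < k" for m
    using that kp by auto
  define B where "B m = betwM n k t fm (j0 * k + m) (stA (j0 * k + m))" for m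
  have PB: "pinv G (chi k (fm ! a)) (srj j0) (snd (B m))" if "m < k" for m
    using binv[of "j0 * k + m"] dm[OF that] cj by (simp add: B_def)
  have E: "snd (B m) s0 (f m) \<noteq> None" if "m < k" for m
    using that
  proof (induction m)
    case 0
    have "snd (B 0) = initT n t (chi k (fm ! a)) (srj j0)"
      using dm[of 0] kp cj by (simp add: B_def betwM_def)
    then show ?case using s0t fn[of 0] kp sj col by (simp add: initT_def)
  next
    case (Suc m)
    have mk: "m < k" using Suc by simp
    have "B (Suc m) = stA (j0 * k + Suc m)"
      using dm[OF Suc.prems] by (simp add: B_def betwM_def)
    also have "\<dots> = foldl (\<lambda>s e. stepM n k t fm (j0 * k + m) s e) (B m) xs"
      by (simp add: stA_Suc B_def)
    finally have BS: "B (Suc m) = foldl (\<lambda>s e. stepM n k t fm (j0 * k + m) s e) (B m) xs" .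
    have stp: "stepM n k t fm (j0 * k + m) q e = (fst q, extT n k t (chi k (fm ! a)) m (snd q) e)" for q e
      using dm[OF mk] Suc.prems cj by (simp add: stepM_def)
    have e0: "{f m, f (Suc m)} \<in> G" using edg[OF mk] Suc.prems by simp
    have "snd (foldl (\<lambda>s e. stepM n k t fm (j0 * k + m) s e) (B m) xs) s0 (f (Suc m)) \<noteq> None"
    proof (rule foldl_event[where P = "\<lambda>q::mstate. pinv G (chi k (fm ! a)) (srj j0) (snd q) \<and> snd q s0 (f m) \<noteq> None", OF e0])
      fix q :: mstate and e assume "e \<in> G" "pinv G (chi k (fm ! a)) (srj j0) (snd q) \<and> snd q s0 (f m) \<noteq> None"
      moreover have "is_edge n e" using valid \<open>e \<in> G\<close> by blast
      ultimately show "pinv G (chi k (fm ! a)) (srj j0) (snd (stepM n k t fm (j0 * k + m) q e)) \<and>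
          snd (stepM n k t fm (j0 * k + m) q e) s0 (f m) \<noteq> None"
        using ext_pinv ext_mono stp by simp
    next
      fix q :: mstate and e assume "snd q s0 (f (Suc m)) \<noteq> None"
      then show "snd (stepM n k t fm (j0 * k + m) q e) s0 (f (Suc m)) \<noteq> None"
        using ext_mono stp by simp
    next
      fix q :: mstate assume h: "pinv G (chi k (fm ! a)) (srj j0) (snd q) \<and> snd q s0 (f m) \<noteq> None"
      have "extT n k t (chi k (fm ! a)) m (snd q) {f m, f (Suc m)} s0 (f (Suc m)) \<noteq> None"
        by (rule ext_event[where w = "f m"]) (use h col mk Suc.prems s0t fn in auto)
      then show "snd (stepM n k t fm (j0 * k + m) q {f m, f (Suc m)}) s0 (f (Suc m)) \<noteq> None"
        using stp by simp
    next
      show "pinv G (chi k (fm ! a)) (srj j0) (snd (B m)) \<and> snd (B m) s0 (f m) \<noteq> None"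
        using PB[OF mk] Suc.IH mk by simp
    qed
    then show ?case using BS by simp
  qed
  have km: "k - 1 < k" using kp by simp
  have "stA (j0 * k + k) = foldl (\<lambda>s e. stepM n k t fm (j0 * k + (k - 1)) s e) (B (k - 1)) xs"
    using stA_Suc[of "j0 * k + (k - 1)"] kp by (simp add: B_def)
  moreover have stp: "stepM n k t fm (j0 * k + (k - 1)) q e =
      (closeF t (chi k (fm ! a)) k (srj j0) (snd q) e (fst q), snd q)" for q e
    using dm[OF km] kp cj by (simp add: stepM_def)
  moreover have "fst (foldl (\<lambda>s e. stepM n k t fm (j0 * k + (k - 1)) s e) (B (k - 1)) xs) \<noteq> None"
  proof -
  have e1: "{f (k - 1), f 0} \<in> G" using edg[OF km] kp by simp
  show ?thesis
  proof (rule foldl_event[where P = "\<lambda>q::mstate. snd q s0 (f (k - 1)) \<noteq> None", OF e1])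
    show "snd (B (k - 1)) s0 (f (k - 1)) \<noteq> None" using E[OF km] .
    fix q :: mstate assume h: "snd q s0 (f (k - 1)) \<noteq> None"
    have ne: "f (k - 1) \<noteq> f 0" using inj k2 by (auto dest: inj_onD)
    have "Cl t (chi k (fm ! a)) k (srj j0) (snd q) {f (k - 1), f 0} (s0, f (k - 1))"
      unfolding Cl_def using s0t sj ne h col km by simp
    then show "fst (stepM n k t fm (j0 * k + (k - 1)) q {f (k - 1), f 0}) \<noteq> None"
      using stp close_event by simp
  qed (use stp close_mono in auto)
  qed
  ultimately have "fst (stA (j0 * k + k)) \<noteq> None" by simp
  moreover have "j0 * k + k \<le> p" using pp by (simp add: algebra_simps)
  ultimately show ?thesis using fst_mono by blast
qed

end




lemma QM_sub:
  "QM n k t \<subseteq> (\<lambda>(fd, g). (fd, \<lambda>s u. if s < t \<and> u < n then g (s, u) else None)) `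
     (insert None (Some ` Pow {0..<n}) \<times>
      PiE ({0..<t} \<times> {0..<n}) (\<lambda>_. insert None (Some ` {ps. set ps \<subseteq> {0..<n} \<and> length ps \<le> k})))"
  (is "_ \<subseteq> ?H ` (?FD \<times> ?P)")
proof
  fix q assume q: "q \<in> QM n k t"
  have A: "\<forall>V. fst q = Some V \<longrightarrow> V \<subseteq> {0..<n}" "\<forall>s u. snd q s u \<noteq> None \<longrightarrow> s < t \<and> u < n"
     "\<forall>s u ps. snd q s u = Some ps \<longrightarrow> length ps \<le> k \<and> set ps \<subseteq> {0..<n}"
    using q unfolding QM_def by auto
  define g where "g = restrict (\<lambda>(s, u). snd q s u) ({0..<t} \<times> {0..<n})"
  have m1: "fst q \<in> ?FD" using A(1) by (cases "fst q") auto
  have m2: "g \<in> ?P"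
  proof -
    have "snd q s u \<in> insert None (Some ` {ps. set ps \<subseteq> {0..<n} \<and> length ps \<le> k})" for s u
      using A(3) by (cases "snd q s u") auto
    then show ?thesis unfolding g_def by auto
  qed
  have m3: "?H (fst q, g) = q"
  proof -
    have "(\<lambda>s u. if s < t \<and> u < n then g (s, u) else None) = snd q"
    proof (intro ext)
      fix s u show "(if s < t \<and> u < n then g (s, u) else None) = snd q s u"
      proof (cases "s < t \<and> u < n")
        case True then show ?thesis by (simp add: g_def)
      next
        case False then have "\<not> snd q s u \<noteq> None" using A(2) by blast
        moreover have "(if s < t \<and> u < n then g (s, u) else None) = None" by (rule if_not_P[OF False])
        ultimately show ?thesis by simp
      qed
    qed
    then show ?thesis by (cases q) simp
  qed
  show "q \<in> ?H ` (?FD \<times> ?P)"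
  proof (rule image_eqI)
    show "q = ?H (fst q, g)" using m3 by simp
    show "(fst q, g) \<in> ?FD \<times> ?P" using m1 m2 by blast
  qed
qed

lemma sum_pow_le: "(\<Sum>i\<le>k. (n::nat) ^ i) \<le> (k + 1) * n ^ k" if "n \<ge> 1"
proof -
  have "(\<Sum>i\<le>k. n ^ i) \<le> (\<Sum>i\<le>k. n ^ k)"
    by (rule sum_mono) (use that in \<open>auto intro: power_increasing\<close>)
  then show ?thesis by simp
qed

lemma pow_k2: "(k::nat) + 2 \<le> 2 ^ (k + 1)"
  by (induction k) auto

lemma QM_card:
  assumes n1: "n \<ge> 1" and nb: "n \<le> 2 ^ b"
  shows "finite (QM n k t) \<and> card (QM n k t) \<le> 2 ^ (n + 1 + (k * b + k + 1) * (t * n))"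
proof -
  let ?FD = "insert None (Some ` Pow {0..<n})"
  let ?BB = "insert None (Some ` {ps. set ps \<subseteq> {0..<n} \<and> length ps \<le> k})"
  let ?P = "PiE ({0..<t} \<times> {0..<n}) (\<lambda>_. ?BB)"
  let ?H = "(\<lambda>(fd, g). (fd, \<lambda>s u. if s < t \<and> u < n then g (s, u) else None))
     :: nat set option \<times> (nat \<times> nat \<Rightarrow> nat list option) \<Rightarrow> mstate"
  have finL: "finite {ps. set ps \<subseteq> {0..<n} \<and> length ps \<le> k}"
    using finite_lists_length_le[of "{0..<n}" k] by simp
  have fFD: "finite ?FD" by simp
  have fP: "finite ?P" using finL by (intro finite_PiE) auto
  have cFD: "card ?FD = Suc (2 ^ n)"
    by (subst card_insert_disjoint) (auto simp: card_image card_Pow)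
  have cBB0: "card ?BB = Suc (\<Sum>i\<le>k. n ^ i)"
    using finL card_lists_length_le[of "{0..<n}" k]
    by (subst card_insert_disjoint) (auto simp: card_image)
  have "(\<Sum>i\<le>k. n ^ i) \<le> (k + 1) * n ^ k" using sum_pow_le n1 by blast
  also have "\<dots> \<le> (k + 1) * (2 ^ b) ^ k" using nb by (intro mult_le_mono2 power_mono) auto
  finally have "card ?BB \<le> Suc ((k + 1) * 2 ^ (b * k))" using cBB0 by (simp add: power_mult)
  also have "\<dots> \<le> (k + 2) * 2 ^ (b * k)" by simp
  also have "\<dots> \<le> 2 ^ (k + 1) * 2 ^ (b * k)" using pow_k2 by (intro mult_le_mono1) auto
  also have "\<dots> = 2 ^ (k * b + k + 1)" by (simp add: power_add[symmetric] mult.commute)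
  finally have cBB: "card ?BB \<le> 2 ^ (k * b + k + 1)" .
  have cP: "card ?P = card ?BB ^ (t * n)"
    by (simp add: card_PiE)
  have sub: "QM n k t \<subseteq> ?H ` (?FD \<times> ?P)" by (rule QM_sub)
  have fimg: "finite (?H ` (?FD \<times> ?P))" using fFD fP by (intro finite_imageI finite_SigmaI)
  have fin: "finite (QM n k t)" by (rule finite_subset[OF sub fimg])
  have "card (QM n k t) \<le> card (?H ` (?FD \<times> ?P))" by (rule card_mono[OF fimg sub])
  also have "\<dots> \<le> card (?FD \<times> ?P)" by (rule card_image_le) (use fFD fP in \<open>intro finite_SigmaI\<close>)
  also have "\<dots> = Suc (2 ^ n) * card ?BB ^ (t * n)" using cFD cP by (simp add: card_cartesian_product)
  also have "\<dots> \<le> 2 ^ (n + 1) * (2 ^ (k * b + k + 1)) ^ (t * n)"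
  proof (rule mult_le_mono)
    show "Suc (2 ^ n) \<le> 2 ^ (n + 1)" by simp
    show "card ?BB ^ (t * n) \<le> (2 ^ (k * b + k + 1)) ^ (t * n)" by (rule power_mono[OF cBB]) simp
  qed
  also have "\<dots> = 2 ^ (n + 1 + (k * b + k + 1) * (t * n))" by (simp only: power_add power_mult)
  finally show ?thesis using fin by simp
qed




lemma main_alg:
  assumes k2: "k \<ge> 2" and n1: "n \<ge> 1" and b1: "b \<ge> 1" and nb: "n \<le> 2 ^ b"
    and G1: "p div (k * length (fam k b)) \<ge> 1"
  shows "D_sub_cycle k n p \<le> n + 1 + (k * b + k + 1) * ((n div (p div (k * length (fam k b))) + 1) * n)"
proof -
  define fm where "fm = fam k b"
  define L where "L = length fm"
  define G0 where "G0 = p div (k * L)"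
  define t where "t = n div G0 + 1"
  have G0: "G0 \<ge> 1" using G1 by (simp add: G0_def L_def fm_def)
  have Lp: "L > 0" using G0 by (cases L) (auto simp: G0_def)
  have tpos: "t > 0" by (simp add: t_def)
  have nGt: "n < G0 * t"
  proof -
    have "n div G0 * G0 + n mod G0 = n" by (rule div_mult_mod_eq)
    moreover have "n mod G0 < G0" using G0 by simp
    moreover have "G0 * t = n div G0 * G0 + G0" by (simp add: t_def algebra_simps)
    ultimately show ?thesis by linarith
  qed
  have GkL: "G0 * (k * L) \<le> p" unfolding G0_def by (rule div_times_less_eq_dividend)
  have QC: "finite (QM n k t) \<and> card (QM n k t) \<le> 2 ^ (n + 1 + (k * b + k + 1) * (t * n))"
    using QM_card[OF n1 nb] .
  have "D_sub_cycle k n p \<le> n + 1 + (k * b + k + 1) * (t * n)"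
  proof (rule D_le[where Q = "QM n k t" and init = "(None, \<lambda>_ _. None)" and step = "stepM n k t fm"
        and betw = "betwM n k t fm" and out = fst])
    show "finite (QM n k t)" using QC by blast
    show "card (QM n k t) \<le> 2 ^ (n + 1 + (k * b + k + 1) * (t * n))" using QC by blast
    show "(None, \<lambda>_ _. None) \<in> QM n k t" by (simp add: QM_def)
    show "\<And>i q e. q \<in> QM n k t \<Longrightarrow> stepM n k t fm i q e \<in> QM n k t" by (rule stepM_QM)
    show "\<And>i q. q \<in> QM n k t \<Longrightarrow> betwM n k t fm i q \<in> QM n k t" using k2 by (intro betwM_QM) auto
    fix xs :: "nat set list" assume dx: "distinct xs" and vx: "\<forall>e\<in>set xs. is_edge n e"
    interpret R: run_ctx n k t fm xs using k2 vx by unfold_locales auto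
    have rs: "runA (None, \<lambda>_ _. None) (stepM n k t fm) (betwM n k t fm) p xs = R.stA p"
      by (simp add: R.stA_def)
    have snd: "finv (set xs) k (fst (R.stA p))" by (rule R.sound)
    show "case fst (runA (None, \<lambda>_ _. None) (stepM n k t fm) (betwM n k t fm) p xs) of
        None \<Rightarrow> \<not> (\<exists>f. cycle_copy k (set xs) f)
      | Some V \<Rightarrow> (\<exists>f. cycle_copy k (set xs) f \<and> V = f ` {0..<k})"
    proof (cases "fst (R.stA p)")
      case (Some V)
      then show ?thesis using snd rs unfolding finv_def by simp
    next
      case None
      have "\<not> (\<exists>f. cycle_copy k (set xs) f)"
      proof
        assume "\<exists>f. cycle_copy k (set xs) f"
        then obtain f where cyc: "cycle_copy k (set xs) f" by blast
        have edg: "{f i, f (Suc i mod k)} \<in> set xs" if "i < k" for i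
          using cyc that unfolding cycle_copy_def by blast
        have fn: "f i < n" if "i < k" for i
        proof -
          have "is_edge n {f i, f (Suc i mod k)}" using edg[OF that] vx by blast
          then show ?thesis unfolding is_edge_def by (metis doubleton_eq_iff)
        qed
        have inj: "inj_on f {0..<k}" using cyc unfolding cycle_copy_def by blast
        have "\<forall>i<k. f i < 2 ^ b" using fn nb by (meson less_le_trans)
        then obtain \<phi> where ph: "\<phi> \<in> set fm" "\<forall>i<k. chi k \<phi> (f i) = Some i"
          using good_coloring[of k b f] k2 b1 inj unfolding fm_def by auto
        then obtain a where a: "a < L" "fm ! a = \<phi>" unfolding L_def by (metis in_set_conv_nth)
        define j0 where "j0 = (f 0 div t) * L + a"
        have "f 0 < n" using fn k2 by simp
        then have "f 0 < G0 * t" using nGt by simp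
        then have "f 0 div t < G0" using tpos by (simp add: div_less_iff_less_mult mult.commute)
        then have "Suc (f 0 div t) \<le> G0" by simp
        then have "Suc (f 0 div t) * L \<le> G0 * L" by (rule mult_le_mono1)
        moreover have "j0 + 1 \<le> Suc (f 0 div t) * L" using a by (simp add: j0_def)
        ultimately have "j0 + 1 \<le> G0 * L" by linarith
        then have "(j0 + 1) * k \<le> G0 * L * k" by (rule mult_le_mono1)
        then have pp: "(j0 + 1) * k \<le> p" using GkL by (simp add: algebra_simps)
        have "fst (R.stA p) \<noteq> None"
          by (rule R.complete[OF cyc _ _ tpos _ pp]) (use a ph in \<open>auto simp: L_def j0_def\<close>)
        then show False using None by simp
      qed
      then show ?thesis using None rs by simp
    qed
  qed
  then show ?thesis by (simp add: t_def G0_def L_def fm_def)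
qed




lemma realA:
  fixes D N P W G NF Lg c K2 kr :: real and k :: nat
  assumes Lg1: "1 \<le> Lg" and N1: "1 \<le> N" and P0: "0 < P" and PcN: "P \<le> c * N" and c0: "c > 0"
    and D: "D \<le> N + 1 + W * ((N / G + 1) * N)" and G1: "1 \<le> G" and PG: "P \<le> 2 * kr * NF * G"
    and W0: "0 \<le> W" and W: "W \<le> 2 * (2 * kr + 1) * Lg" and NF0: "0 \<le> NF"
    and NF: "NF \<le> 2 ^ (k - 1) * K2 * Lg ^ (k - 1)" and k1: "k \<ge> 1" and kr: "kr = real k"
  shows "D \<le> ((4 * kr + 4) * c + 4 * kr * (2 * kr + 1) * 2 ^ (k - 1) * K2) * (N ^ 2 / P) * Lg ^ k"
proof -
  define X where "X = N ^ 2 / P"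
  have X0: "X \<ge> 0" using P0 by (simp add: X_def)
  have NX: "N \<le> c * X"
  proof -
    have "N * P \<le> N * (c * N)" using PcN N1 by (intro mult_left_mono) auto
    then have "N \<le> c * N ^ 2 / P" using P0 by (simp add: field_simps power2_eq_square)
    then show ?thesis by (simp add: X_def)
  qed
  have G0: "G > 0" using G1 by simp
  have NG: "N / G * N \<le> 2 * kr * NF * X"
  proof -
    have "N / G * N = N ^ 2 / G" by (simp add: power2_eq_square)
    also have "\<dots> \<le> N ^ 2 * (2 * kr * NF / P)"
    proof -
      have "1 / G \<le> 2 * kr * NF / P" using PG G0 P0 by (simp add: field_simps)
      then have "N ^ 2 * (1 / G) \<le> N ^ 2 * (2 * kr * NF / P)" by (intro mult_left_mono) auto
      then show ?thesis by simp
    qed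
    also have "\<dots> = 2 * kr * NF * X" by (simp add: X_def)
    finally show ?thesis .
  qed
  have Lk: "Lg ^ (k - 1) * Lg = Lg ^ k" using k1 by (metis Suc_diff_1 less_le_trans zero_less_one power_Suc2 le_eq_less_or_eq)
  have L1k: "1 \<le> Lg ^ k" using Lg1 by simp
  have LLk: "Lg \<le> Lg ^ k" using Lg1 k1 by (metis power_one_right power_increasing)
  have D1: "D \<le> N + 1 + W * N + W * (N / G * N)" using D by (simp add: algebra_simps)
  have "W * (N / G * N) \<le> W * (2 * kr * NF * X)" using NG W0 by (rule mult_left_mono)
  also have "\<dots> = 2 * kr * (W * NF) * X" by simp
  also have "\<dots> \<le> 2 * kr * ((2 * (2 * kr + 1) * Lg) * (2 ^ (k - 1) * K2 * Lg ^ (k - 1))) * X"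
    using W NF W0 NF0 X0 kr by (intro mult_right_mono mult_left_mono mult_mono) auto
  also have "\<dots> = 4 * kr * (2 * kr + 1) * 2 ^ (k - 1) * K2 * X * (Lg ^ (k - 1) * Lg)" by (simp add: algebra_simps)
  also have "\<dots> = 4 * kr * (2 * kr + 1) * 2 ^ (k - 1) * K2 * X * Lg ^ k" using Lk by simp
  finally have T1: "W * (N / G * N) \<le> 4 * kr * (2 * kr + 1) * 2 ^ (k - 1) * K2 * X * Lg ^ k" .
  have "N + 1 + W * N \<le> (2 + W) * N" using N1 by (simp add: algebra_simps)
  also have "\<dots> \<le> (2 + W) * (c * X)" using NX W0 by (intro mult_left_mono) auto
  also have "\<dots> \<le> ((4 * kr + 4) * Lg) * (c * X)"
  proof -
    have "2 + W \<le> (4 * kr + 4) * Lg" using W Lg1 kr by (simp add: algebra_simps)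
    then show ?thesis using c0 X0 by (intro mult_right_mono) auto
  qed
  also have "\<dots> \<le> ((4 * kr + 4) * Lg ^ k) * (c * X)"
    using LLk c0 X0 kr by (intro mult_right_mono mult_left_mono) auto
  finally have T2: "N + 1 + W * N \<le> (4 * kr + 4) * c * X * Lg ^ k" by (simp add: algebra_simps)
  have "D \<le> (4 * kr + 4) * c * X * Lg ^ k + 4 * kr * (2 * kr + 1) * 2 ^ (k - 1) * K2 * X * Lg ^ k"
    using D1 T1 T2 by linarith
  then show ?thesis by (simp add: X_def algebra_simps)
qed

lemma realB:
  fixes D N P NF Lg K2 kr :: real and k :: nat
  assumes Lg1: "1 \<le> Lg" and P0: "0 < P" and D: "D \<le> N * N" and PN: "P \<le> kr * NF" and kr: "kr \<ge> 0" and K0: "K2 \<ge> 0"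
    and NF: "NF \<le> 2 ^ (k - 1) * K2 * Lg ^ (k - 1)" and k1: "k \<ge> 1"
  shows "D \<le> (kr * 2 ^ (k - 1) * K2) * (N ^ 2 / P) * Lg ^ k"
proof -
  have "D \<le> N ^ 2 / P * P" using D P0 by (simp add: power2_eq_square)
  also have "\<dots> \<le> N ^ 2 / P * (kr * NF)" using PN P0 by (intro mult_left_mono) auto
  also have "\<dots> \<le> N ^ 2 / P * (kr * (2 ^ (k - 1) * K2 * Lg ^ (k - 1)))"
    using NF kr P0 by (intro mult_left_mono) auto
  also have "\<dots> \<le> N ^ 2 / P * (kr * (2 ^ (k - 1) * K2 * Lg ^ k))"
  proof -
    have "Lg ^ (k - 1) \<le> Lg ^ k" using Lg1 by (intro power_increasing) auto
    moreover have "0 \<le> 2 ^ (k - 1) * K2" using K0 by simp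
    ultimately have "2 ^ (k - 1) * K2 * Lg ^ (k - 1) \<le> 2 ^ (k - 1) * K2 * Lg ^ k" by (intro mult_left_mono)
    then have "kr * (2 ^ (k - 1) * K2 * Lg ^ (k - 1)) \<le> kr * (2 ^ (k - 1) * K2 * Lg ^ k)" using kr by (rule mult_left_mono)
    then show ?thesis by (rule mult_left_mono) (use P0 in auto)
  qed
  finally show ?thesis by (simp add: algebra_simps)
qed




theorem proposition15:
  fixes l :: nat
  assumes "l \<ge> 1"
  shows "\<forall>c::real. c > 0 \<longrightarrow> (\<exists>(C::real) (k::nat). \<forall>n p. n \<ge> 2 \<and> p \<ge> 1 \<and> real p \<le> c * real n \<longrightarrow>
           real (D_sub_cycle (2 * l + 1) n p) \<le> C * (real n)^2 / real p * (ln (real n)) ^ k)"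
proof (intro allI impI)
  fix c :: real assume c0: "c > 0"
  define k where "k = 2 * l + 1"
  have k2: "k \<ge> 2" "k \<ge> 1" using assms by (auto simp: k_def)
  define K2 :: nat where "K2 = (2 ^ (k - 1)) ^ k"
  define kr where "kr = real k"
  define C0 where "C0 = ((4 * kr + 4) * c + 4 * kr * (2 * kr + 1) * 2 ^ (k - 1) * real K2)
      + kr * 2 ^ (k - 1) * real K2"
  have main: "real (D_sub_cycle k n p) \<le> C0 * ((real n)^2 / real p) * (log 2 (real n)) ^ k"
    if n2: "n \<ge> 2" and p1: "p \<ge> 1" and pc: "real p \<le> c * real n" for n p
  proof -
    define b where "b = floor_log n + 1"
    define NF where "NF = length (fam k b)"
    define Lg where "Lg = log 2 (real n)"
    define N where "N = real n"
    define P where "P = real p"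
    have NFd: "NF = b ^ (k - 1) * K2" by (simp add: NF_def length_fam K2_def)
    have b1: "b \<ge> 1" by (simp add: b_def)
    have nb: "n \<le> 2 ^ b" using floor_log_exp2_gt[of n] by (simp add: b_def)
    have Lg1: "1 \<le> Lg" unfolding Lg_def using n2 by (subst one_le_log_cancel_iff) auto
    have fl: "real (floor_log n) \<le> Lg"
    proof -
      have "log 2 (real n) \<ge> 0" using Lg1 Lg_def by simp
      then show ?thesis using n2 by (simp add: floor_log_altdef Lg_def)
    qed
    have B2: "real b \<le> 2 * Lg" using fl Lg1 by (simp add: b_def)
    have B1: "real b \<ge> 1" using b1 by simp
    have NFr: "real NF \<le> 2 ^ (k - 1) * real K2 * Lg ^ (k - 1)"
    proof -
      have "real NF = real b ^ (k - 1) * real K2" by (simp add: NFd)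
      also have "\<dots> \<le> (2 * Lg) ^ (k - 1) * real K2" using B2 by (intro mult_right_mono power_mono) auto
      also have "\<dots> = 2 ^ (k - 1) * real K2 * Lg ^ (k - 1)" by (simp add: power_mult_distrib)
      finally show ?thesis .
    qed
    have NF1: "NF \<ge> 1" using b1 by (simp add: NFd K2_def)
    have P0: "P > 0" using p1 by (simp add: P_def)
    have N1: "N \<ge> 1" using n2 by (simp add: N_def)
    show ?thesis
    proof (cases "p div (k * NF) \<ge> 1")
      case True
      define G0 where "G0 = p div (k * NF)"
      have DA: "D_sub_cycle k n p \<le> n + 1 + (k * b + k + 1) * ((n div G0 + 1) * n)"
        using main_alg[OF k2(1) _ b1 nb] True n2 by (simp add: G0_def NF_def)
      define W where "W = real (k * b + k + 1)"
      have W0: "W \<ge> 0" by (simp add: W_def)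
      have W: "W \<le> 2 * (2 * kr + 1) * Lg"
      proof -
        have "W = kr * real b + kr + 1" by (simp add: W_def kr_def)
        also have "\<dots> \<le> (2 * kr + 1) * real b" using B1 mult_right_mono[OF B1, of "real k"] by (simp add: algebra_simps kr_def)
        also have "\<dots> \<le> (2 * kr + 1) * (2 * Lg)" using B2 by (intro mult_left_mono) (auto simp: kr_def)
        finally show ?thesis by (simp add: algebra_simps)
      qed
      have G1: "real G0 \<ge> 1" using True by (simp add: G0_def)
      have PG: "P \<le> 2 * kr * real NF * real G0"
      proof -
        have "p div (k * NF) * (k * NF) + p mod (k * NF) = p" by (rule div_mult_mod_eq)
        moreover have "p mod (k * NF) < k * NF" using NF1 k2 by simp
        ultimately have "p < (G0 + 1) * (k * NF)" by (simp add: G0_def algebra_simps)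
        also have "\<dots> \<le> (2 * G0) * (k * NF)" using True by (intro mult_le_mono1) (simp add: G0_def)
        finally have "p \<le> 2 * k * NF * G0" by (simp add: algebra_simps)
        then have "real p \<le> real (2 * k * NF * G0)" by linarith
        then show ?thesis by (simp add: P_def kr_def)
      qed
      have DR: "real (D_sub_cycle k n p) \<le> N + 1 + W * ((N / real G0 + 1) * N)"
      proof -
        have "real (D_sub_cycle k n p) \<le> real (n + 1 + (k * b + k + 1) * ((n div G0 + 1) * n))"
          using DA by linarith
        also have "\<dots> = N + 1 + W * ((real (n div G0) + 1) * N)" by (simp add: W_def N_def algebra_simps)
        also have "\<dots> \<le> N + 1 + W * ((N / real G0 + 1) * N)"
          using W0 N1 of_nat_div_le_of_nat[of n G0] by (intro add_left_mono mult_left_mono mult_right_mono) (auto simp: N_def)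
        finally show ?thesis .
      qed
      have PcN: "P \<le> c * N" using pc by (simp add: P_def N_def)
      have "real (D_sub_cycle k n p) \<le> ((4 * kr + 4) * c + 4 * kr * (2 * kr + 1) * 2 ^ (k - 1) * real K2) * (N ^ 2 / P) * Lg ^ k"
        by (rule realA[OF Lg1 N1 P0 PcN c0 DR G1 PG W0 W _ NFr k2(2) kr_def]) simp
      also have "\<dots> \<le> C0 * (N ^ 2 / P) * Lg ^ k"
      proof -
        have X0: "0 \<le> (N ^ 2 / P) * Lg ^ k" using P0 Lg1 by simp
        have B0: "0 \<le> kr * 2 ^ (k - 1) * real K2" by (simp add: kr_def)
        let ?A = "(4 * kr + 4) * c + 4 * kr * (2 * kr + 1) * 2 ^ (k - 1) * real K2"
        have "?A * (N ^ 2 / P) * Lg ^ k = ?A * ((N ^ 2 / P) * Lg ^ k)" by (simp only: mult.assoc)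
        also have "\<dots> \<le> (?A + kr * 2 ^ (k - 1) * real K2) * ((N ^ 2 / P) * Lg ^ k)"
          by (rule mult_right_mono) (use B0 X0 in auto)
        also have "\<dots> = C0 * (N ^ 2 / P) * Lg ^ k" by (simp only: C0_def mult.assoc)
        finally show ?thesis .
      qed
      finally show ?thesis by (simp add: N_def P_def Lg_def)
    next
      case False
      then have "p div (k * NF) = 0" by simp
      then have pk: "p < k * NF" using NF1 k2 by (simp add: div_eq_0_iff)
      have DB: "real (D_sub_cycle k n p) \<le> N * N"
        using trivial_alg[OF p1, of k n] by (simp add: N_def) (metis of_nat_le_iff of_nat_mult)
      have PN: "P \<le> kr * real NF" using pk by (simp add: P_def kr_def) (metis of_nat_le_iff of_nat_mult less_imp_le)
      have "real (D_sub_cycle k n p) \<le> (kr * 2 ^ (k - 1) * real K2) * (N ^ 2 / P) * Lg ^ k"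
        by (rule realB[OF Lg1 P0 DB PN _ _ NFr k2(2)]) (auto simp: kr_def)
      also have "\<dots> \<le> C0 * (N ^ 2 / P) * Lg ^ k"
      proof -
        have X0: "0 \<le> (N ^ 2 / P) * Lg ^ k" using P0 Lg1 by simp
        let ?A = "(4 * kr + 4) * c + 4 * kr * (2 * kr + 1) * 2 ^ (k - 1) * real K2"
        have A0: "0 \<le> ?A" using c0 by (simp add: kr_def)
        let ?B = "kr * 2 ^ (k - 1) * real K2"
        have "?B * (N ^ 2 / P) * Lg ^ k = ?B * ((N ^ 2 / P) * Lg ^ k)" by (simp only: mult.assoc)
        also have "\<dots> \<le> (?A + ?B) * ((N ^ 2 / P) * Lg ^ k)"
          by (rule mult_right_mono) (use A0 X0 in auto)
        also have "\<dots> = C0 * (N ^ 2 / P) * Lg ^ k" by (simp only: C0_def mult.assoc)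
        finally show ?thesis .
      qed
      finally show ?thesis by (simp add: N_def P_def Lg_def)
    qed
  qed
  show "\<exists>(C::real) (kk::nat). \<forall>n p. n \<ge> 2 \<and> p \<ge> 1 \<and> real p \<le> c * real n \<longrightarrow>
           real (D_sub_cycle (2 * l + 1) n p) \<le> C * (real n)^2 / real p * (ln (real n)) ^ kk"
  proof (intro exI allI impI)
    fix n p :: nat assume h: "n \<ge> 2 \<and> p \<ge> 1 \<and> real p \<le> c * real n"
    have "real (D_sub_cycle (2 * l + 1) n p) \<le> C0 * ((real n)^2 / real p) * (log 2 (real n)) ^ k"
      using main h unfolding k_def by blast
    also have "\<dots> = C0 / (ln 2) ^ k * (real n)^2 / real p * (ln (real n)) ^ k"
      by (simp add: log_def power_divide)
    finally show "real (D_sub_cycle (2 * l + 1) n p) \<le> C0 / (ln 2) ^ k * (real n)^2 / real p * (ln (real n)) ^ k" .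
  qed
qed


end
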